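(* Let $U$ be an $\mathrm{OST}$-monoid, $V$ a supertropical monoid, and $\alpha:U\to V$ a surjective transmission such that for every $p\in V$ the fiber $\alpha^{-1}(p)$ is convex in $U$. Then $V$, equipped with the total ordering induced by $\alpha$, is an $\mathrm{OST}$-monoid.
   Context: A supertropical monoid is a commutative monoid $(U,\cdot)$ with absorbing element $0$ and distinguished idempotent $e$ with $ex=0\Rightarrow x=0$, together with a total ordering $\le_M$ on $M:=eU$, compatible with multiplication and with $0$ least, making $M$ a bipotent semiring. A transmission $\alpha:U\to V$ is a map with $\alpha(0)=0$, $\alpha(1)=1$, multiplicative, $\alpha(e_U)=e_V$, order-preserving on $eU$. An OST-monoid is a supertropical monoid $U$ with a total ordering $\le$ on $U$ such that: (OST1) $x\le y\Rightarrow xz\le yz$; (OST2) on $M$ the ordering $\le$ coincides with $\le_M$; (OST3) $0\le1\le e$. A subset $C$ of a totally ordered set $X$ is convex if $x,y\in C$, $z\in X$, $x\le z\le y$ imply $z\in C$. If $f:X\to Y$ is a surjection from a totally ordered set with convex fibers, the ordering induced by $f$ is the unique total ordering on $Y$ making $f$ order preserving. *)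

theory Defs
  imports Main
begin

text \<open>A commutative monoid with absorbing zero, a distinguished idempotent e,
  and an ordering leM intended to be a total order on the ghost ideal M = e U.\<close>
record 'a stm =
  carrier :: "'a set"
  mult    :: "'a \<Rightarrow> 'a \<Rightarrow> 'a"
  zero    :: 'a
  one     :: 'a
  ee      :: 'a
  leM     :: "'a \<Rightarrow> 'a \<Rightarrow> bool"

definition total_order_on :: "'a set \<Rightarrow> ('a \<Rightarrow> 'a \<Rightarrow> bool) \<Rightarrow> bool" where
  "total_order_on A le \<longleftrightarrow>
     (\<forall>x\<in>A. le x x) \<and>
     (\<forall>x\<in>A. \<forall>y\<in>A. le x y \<and> le y x \<longrightarrow> x = y) \<and>
     (\<forall>x\<in>A. \<forall>y\<in>A. \<forall>z\<in>A. le x y \<and> le y z \<longrightarrow> le x z) \<and>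
     (\<forall>x\<in>A. \<forall>y\<in>A. le x y \<or> le y x)"

definition ghost :: "('a, 'b) stm_scheme \<Rightarrow> 'a set" where
  "ghost U = (\<lambda>x. mult U (ee U) x) ` carrier U"

definition supertropical_monoid :: "('a, 'b) stm_scheme \<Rightarrow> bool" where
  "supertropical_monoid U \<longleftrightarrow>
     zero U \<in> carrier U \<and> one U \<in> carrier U \<and> ee U \<in> carrier U \<and>
     (\<forall>x\<in>carrier U. \<forall>y\<in>carrier U. mult U x y \<in> carrier U) \<and>
     (\<forall>x\<in>carrier U. \<forall>y\<in>carrier U. \<forall>z\<in>carrier U.
        mult U (mult U x y) z = mult U x (mult U y z)) \<and>
     (\<forall>x\<in>carrier U. \<forall>y\<in>carrier U. mult U x y = mult U y x) \<and>
     (\<forall>x\<in>carrier U. mult U (one U) x = x) \<and>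
     (\<forall>x\<in>carrier U. mult U (zero U) x = zero U) \<and>
     mult U (ee U) (ee U) = ee U \<and>
     (\<forall>x\<in>carrier U. mult U (ee U) x = zero U \<longrightarrow> x = zero U) \<and>
     total_order_on (ghost U) (leM U) \<and>
     (\<forall>x\<in>ghost U. \<forall>y\<in>ghost U. \<forall>z\<in>ghost U.
        leM U x y \<longrightarrow> leM U (mult U x z) (mult U y z)) \<and>
     (\<forall>x\<in>ghost U. leM U (zero U) x)"

definition transmission :: "('a, 'c) stm_scheme \<Rightarrow> ('b, 'd) stm_scheme \<Rightarrow> ('a \<Rightarrow> 'b) \<Rightarrow> bool" where
  "transmission U V \<alpha> \<longleftrightarrow>
     (\<forall>x\<in>carrier U. \<alpha> x \<in> carrier V) \<and>
     \<alpha> (zero U) = zero V \<and> \<alpha> (one U) = one V \<and>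
     (\<forall>x\<in>carrier U. \<forall>y\<in>carrier U. \<alpha> (mult U x y) = mult V (\<alpha> x) (\<alpha> y)) \<and>
     \<alpha> (ee U) = ee V \<and>
     (\<forall>x\<in>ghost U. \<forall>y\<in>ghost U. leM U x y \<longrightarrow> leM V (\<alpha> x) (\<alpha> y))"

definition OST_monoid :: "('a, 'b) stm_scheme \<Rightarrow> ('a \<Rightarrow> 'a \<Rightarrow> bool) \<Rightarrow> bool" where
  "OST_monoid U le \<longleftrightarrow>
     supertropical_monoid U \<and> total_order_on (carrier U) le \<and>
     (\<forall>x\<in>carrier U. \<forall>y\<in>carrier U. \<forall>z\<in>carrier U.
        le x y \<longrightarrow> le (mult U x z) (mult U y z)) \<and>
     (\<forall>x\<in>ghost U. \<forall>y\<in>ghost U. le x y \<longleftrightarrow> leM U x y) \<and>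
     le (zero U) (one U) \<and> le (one U) (ee U)"

definition convex_in :: "'a set \<Rightarrow> ('a \<Rightarrow> 'a \<Rightarrow> bool) \<Rightarrow> 'a set \<Rightarrow> bool" where
  "convex_in X le C \<longleftrightarrow>
     (\<forall>x\<in>C. \<forall>y\<in>C. \<forall>z\<in>X. le x z \<and> le z y \<longrightarrow> z \<in> C)"

definition order_preserving :: "'a set \<Rightarrow> ('a \<Rightarrow> 'a \<Rightarrow> bool) \<Rightarrow> ('b \<Rightarrow> 'b \<Rightarrow> bool) \<Rightarrow> ('a \<Rightarrow> 'b) \<Rightarrow> bool" where
  "order_preserving X le le' f \<longleftrightarrow> (\<forall>x\<in>X. \<forall>y\<in>X. le x y \<longrightarrow> le' (f x) (f y))"

end

theory Submission
  imports Defs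
begin

lemma key:
  assumes tot: "total_order_on (carrier U) le"
    and conv: "\<forall>p\<in>carrier V. convex_in (carrier U) le {x\<in>carrier U. \<alpha> x = p}"
    and mapc: "\<forall>x\<in>carrier U. \<alpha> x \<in> carrier V"
    and x0: "x0 \<in> carrier U" and x1: "x1 \<in> carrier U"
    and y0: "y0 \<in> carrier U" and y1: "y1 \<in> carrier U"
    and "\<alpha> x0 = \<alpha> x1" "\<alpha> y0 = \<alpha> y1" "\<alpha> x0 \<noteq> \<alpha> y0"
    and "le y0 x0" "le x1 y1"
  shows False
proof (cases "le x0 y1")
  case True
  have "convex_in (carrier U) le {x\<in>carrier U. \<alpha> x = \<alpha> y0}" using conv mapc y0 by blast
  moreover have "y0 \<in> {x\<in>carrier U. \<alpha> x = \<alpha> y0}" "y1 \<in> {x\<in>carrier U. \<alpha> x = \<alpha> y0}"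
    using assms by auto
  ultimately have "x0 \<in> {x\<in>carrier U. \<alpha> x = \<alpha> y0}"
    using True assms(4) \<open>le y0 x0\<close> unfolding convex_in_def by blast
  thus False using assms by auto
next
  case False
  hence "le y1 x0" using tot x0 y1 unfolding total_order_on_def by blast
  have "convex_in (carrier U) le {x\<in>carrier U. \<alpha> x = \<alpha> x0}" using conv mapc x0 by blast
  moreover have "x0 \<in> {x\<in>carrier U. \<alpha> x = \<alpha> x0}" "x1 \<in> {x\<in>carrier U. \<alpha> x = \<alpha> x0}"
    using assms by auto
  ultimately have "y1 \<in> {x\<in>carrier U. \<alpha> x = \<alpha> x0}"
    using \<open>le y1 x0\<close> assms(7) \<open>le x1 y1\<close> unfolding convex_in_def by blast
  thus False using assms by auto
qed

theorem theorem61p10: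
  fixes U :: "('a, 'c) stm_scheme" and V :: "('b, 'd) stm_scheme"
    and le :: "'a \<Rightarrow> 'a \<Rightarrow> bool" and \<alpha> :: "'a \<Rightarrow> 'b"
  assumes "OST_monoid U le"
    and "supertropical_monoid V"
    and "transmission U V \<alpha>"
    and "\<alpha> ` carrier U = carrier V"
    and "\<forall>p\<in>carrier V. convex_in (carrier U) le {x\<in>carrier U. \<alpha> x = p}"
  shows "(\<exists>leV. total_order_on (carrier V) leV \<and> order_preserving (carrier U) le leV \<alpha>)
    \<and> (\<forall>leV. total_order_on (carrier V) leV \<and> order_preserving (carrier U) le leV \<alpha>
             \<longrightarrow> OST_monoid V leV)"
proof
  have tot: "total_order_on (carrier U) le" using assms(1) unfolding OST_monoid_def by blast
  have mapc: "\<forall>x\<in>carrier U. \<alpha> x \<in> carrier V" using assms(3) unfolding transmission_def by blast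
  note surj = assms(4)
  note conv = assms(5)
  have K: "False" if "x0 \<in> carrier U" "x1 \<in> carrier U" "y0 \<in> carrier U" "y1 \<in> carrier U"
    "\<alpha> x0 = \<alpha> x1" "\<alpha> y0 = \<alpha> y1" "\<alpha> x0 \<noteq> \<alpha> y0" "le y0 x0" "le x1 y1" for x0 x1 y0 y1
    using key[OF tot conv mapc that] .
  define leV where "leV p q \<longleftrightarrow> p = q \<or> (\<forall>x\<in>carrier U. \<forall>y\<in>carrier U. \<alpha> x = p \<and> \<alpha> y = q \<longrightarrow> le x y)" for p q
  have ex: "\<exists>x\<in>carrier U. \<alpha> x = p" if "p \<in> carrier V" for p using surj that by (metis imageE)
  have T: "total_order_on (carrier V) leV"
    unfolding total_order_on_def
  proof (intro conjI ballI impI)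
    fix p assume "p \<in> carrier V" thus "leV p p" by (simp add: leV_def)
  next
    fix p q assume p: "p \<in> carrier V" and q: "q \<in> carrier V" and h: "leV p q \<and> leV q p"
    show "p = q"
    proof (rule ccontr)
      assume "p \<noteq> q"
      obtain x where x: "x \<in> carrier U" "\<alpha> x = p" using ex p by blast
      obtain y where y: "y \<in> carrier U" "\<alpha> y = q" using ex q by blast
      have "le x y" "le y x" using h x y \<open>p \<noteq> q\<close> unfolding leV_def by auto
      hence "x = y" using tot x y unfolding total_order_on_def by blast
      thus False using x y \<open>p \<noteq> q\<close> by simp
    qed
  next
    fix p q r assume p: "p \<in> carrier V" and q: "q \<in> carrier V" and r: "r \<in> carrier V"
      and h: "leV p q \<and> leV q r"
    show "leV p r"
    proof (cases "p = q \<or> q = r \<or> p = r")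
      case True thus ?thesis using h by (auto simp: leV_def)
    next
      case False
      obtain y where y: "y \<in> carrier U" "\<alpha> y = q" using ex q by blast
      have "le x z" if "x \<in> carrier U" "z \<in> carrier U" "\<alpha> x = p" "\<alpha> z = r" for x z
      proof -
        have "le x y" "le y z" using h False that y unfolding leV_def by auto
        thus ?thesis using tot that y unfolding total_order_on_def by blast
      qed
      thus ?thesis unfolding leV_def by blast
    qed
  next
    fix p q assume p: "p \<in> carrier V" and q: "q \<in> carrier V"
    show "leV p q \<or> leV q p"
    proof (rule ccontr)
      assume "\<not> (leV p q \<or> leV q p)"
      then obtain x0 y0 x1 y1 where "x0 \<in> carrier U" "y0 \<in> carrier U" "\<alpha> x0 = p" "\<alpha> y0 = q" "\<not> le x0 y0"
        "x1 \<in> carrier U" "y1 \<in> carrier U" "\<alpha> x1 = p" "\<alpha> y1 = q" "\<not> le y1 x1" "p \<noteq> q"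
        unfolding leV_def by blast
      moreover hence "le y0 x0" "le x1 y1" using tot unfolding total_order_on_def by blast+
      ultimately show False using K[of x0 x1 y0 y1] by simp
    qed
  qed
  have P: "order_preserving (carrier U) le leV \<alpha>"
    unfolding order_preserving_def
  proof (intro ballI impI)
    fix x y assume x: "x \<in> carrier U" and y: "y \<in> carrier U" and "le x y"
    show "leV (\<alpha> x) (\<alpha> y)"
    proof (cases "\<alpha> x = \<alpha> y")
      case True thus ?thesis by (simp add: leV_def)
    next
      case False
      have "le x' y'" if "x' \<in> carrier U" "y' \<in> carrier U" "\<alpha> x' = \<alpha> x" "\<alpha> y' = \<alpha> y" for x' y'
      proof (rule ccontr)
        assume "\<not> le x' y'"
        hence "le y' x'" using tot that unfolding total_order_on_def by blast
        thus False using K[of x' x y' y] that x y False \<open>le x y\<close> by simp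
      qed
      thus ?thesis unfolding leV_def by blast
    qed
  qed
  show "\<exists>leV. total_order_on (carrier V) leV \<and> order_preserving (carrier U) le leV \<alpha>"
    using T P by blast
next
  show "\<forall>leV. total_order_on (carrier V) leV \<and> order_preserving (carrier U) le leV \<alpha>
             \<longrightarrow> OST_monoid V leV"
  proof (intro allI impI, elim conjE)
    fix leV assume T: "total_order_on (carrier V) leV" and P: "order_preserving (carrier U) le leV \<alpha>"
    have tot: "total_order_on (carrier U) le" using assms(1) unfolding OST_monoid_def by blast
    have U1: "\<forall>x\<in>carrier U. \<forall>y\<in>carrier U. \<forall>z\<in>carrier U. le x y \<longrightarrow> le (mult U x z) (mult U y z)"
      and U2: "\<forall>x\<in>ghost U. \<forall>y\<in>ghost U. le x y \<longleftrightarrow> leM U x y"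
      and U3: "le (zero U) (one U)" "le (one U) (ee U)"
      and SU: "supertropical_monoid U"
      using assms(1) unfolding OST_monoid_def by blast+
    have tr: "\<forall>x\<in>carrier U. \<alpha> x \<in> carrier V" "\<alpha> (zero U) = zero V" "\<alpha> (one U) = one V"
      "\<forall>x\<in>carrier U. \<forall>y\<in>carrier U. \<alpha> (mult U x y) = mult V (\<alpha> x) (\<alpha> y)"
      "\<alpha> (ee U) = ee V"
      "\<forall>x\<in>ghost U. \<forall>y\<in>ghost U. leM U x y \<longrightarrow> leM V (\<alpha> x) (\<alpha> y)"
      using assms(3) unfolding transmission_def by blast+
    have SUc: "zero U \<in> carrier U" "one U \<in> carrier U" "ee U \<in> carrier U"
      "\<forall>x\<in>carrier U. \<forall>y\<in>carrier U. mult U x y \<in> carrier U"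
      using SU unfolding supertropical_monoid_def by blast+
    have totM: "total_order_on (ghost V) (leM V)" using assms(2) unfolding supertropical_monoid_def by blast
    have Pr: "leV (\<alpha> x) (\<alpha> y)" if "x \<in> carrier U" "y \<in> carrier U" "le x y" for x y
      using P that unfolding order_preserving_def by blast
    have lift: "le x y" if "x \<in> carrier U" "y \<in> carrier U" "leV (\<alpha> x) (\<alpha> y)" "\<alpha> x \<noteq> \<alpha> y" for x y
    proof (rule ccontr)
      assume "\<not> le x y"
      hence "le y x" using tot that unfolding total_order_on_def by blast
      hence "leV (\<alpha> y) (\<alpha> x)" using Pr that by blast
      thus False using T that tr(1) unfolding total_order_on_def by blast
    qed
    have gV: "ghost V = \<alpha> ` ghost U"
    proof -
      have "ghost V = (\<lambda>x. mult V (ee V) x) ` (\<alpha> ` carrier U)" unfolding ghost_def using assms(4) by simp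
      also have "\<dots> = \<alpha> ` ghost U" unfolding ghost_def image_image using tr(4,5) SUc(3)
        by (auto intro!: image_cong)
      finally show ?thesis .
    qed
    have gUc: "ghost U \<subseteq> carrier U" unfolding ghost_def using SUc by auto
    show "OST_monoid V leV"
      unfolding OST_monoid_def
    proof (intro conjI)
      show "supertropical_monoid V" by fact
      show "total_order_on (carrier V) leV" by fact
      show "\<forall>x\<in>carrier V. \<forall>y\<in>carrier V. \<forall>z\<in>carrier V. leV x y \<longrightarrow> leV (mult V x z) (mult V y z)"
      proof (intro ballI impI)
        fix p q r assume "p \<in> carrier V" "q \<in> carrier V" "r \<in> carrier V" and h: "leV p q"
        then obtain x y z where xyz: "x \<in> carrier U" "y \<in> carrier U" "z \<in> carrier U"
          "p = \<alpha> x" "q = \<alpha> y" "r = \<alpha> z" using assms(4) by blast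
        show "leV (mult V p r) (mult V q r)"
        proof (cases "p = q")
          case True
          have "mult V p r \<in> carrier V" using xyz tr(1,4) SUc(4) by (metis)
          thus ?thesis using True T unfolding total_order_on_def by blast
        next
          case False
          hence "le x y" using lift xyz h by blast
          hence "le (mult U x z) (mult U y z)" using U1 xyz by blast
          hence "leV (\<alpha> (mult U x z)) (\<alpha> (mult U y z))" using Pr xyz SUc by blast
          thus ?thesis using tr(4) xyz by simp
        qed
      qed
      show "\<forall>x\<in>ghost V. \<forall>y\<in>ghost V. leV x y \<longleftrightarrow> leM V x y"
      proof (intro ballI)
        fix p q assume "p \<in> ghost V" "q \<in> ghost V"
        then obtain a b where ab: "a \<in> ghost U" "b \<in> ghost U" "p = \<alpha> a" "q = \<alpha> b" using gV by blast
        have abc: "a \<in> carrier U" "b \<in> carrier U" using ab gUc by auto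
        have pq: "p \<in> ghost V" "q \<in> ghost V" by fact+
        have pqc: "p \<in> carrier V" "q \<in> carrier V" using ab abc tr by auto
        show "leV p q \<longleftrightarrow> leM V p q"
        proof
          assume h: "leV p q"
          show "leM V p q"
          proof (cases "p = q")
            case True thus ?thesis using totM pq unfolding total_order_on_def by blast
          next
            case False
            hence "le a b" using lift ab abc h by blast
            hence "leM U a b" using U2 ab by blast
            thus ?thesis using tr(6) ab by blast
          qed
        next
          assume h: "leM V p q"
          show "leV p q"
          proof (cases "le a b")
            case True thus ?thesis using Pr ab abc by blast
          next
            case False
            hence "le b a" using tot abc unfolding total_order_on_def by blast
            hence "leM U b a" using U2 ab by blast
            hence "leM V q p" using tr(6) ab by blast
            hence "p = q" using h totM pq unfolding total_order_on_def by blast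
            thus ?thesis using T pqc unfolding total_order_on_def by blast
          qed
        qed
      qed
      show "leV (zero V) (one V)" using Pr[OF SUc(1,2) U3(1)] tr by simp
      show "leV (one V) (ee V)" using Pr[OF SUc(2,3) U3(2)] tr by simp
    qed
  qed
qed

end
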